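(* Let $\mathcal{C}$ be an $(n,k,d)$ linear MDS code over a finite field $\mathbb{F}_q$ with $d \ge 3$, and set $m = \min\{k, n-k-1\}$. Then $$\rho(\mathcal{C}) \le \binom{n}{d-2} - U(n,d-2,m).$$
   Context: An $(n,k,d)$ linear MDS code is a linear code over $\mathbb{F}_q$ of length $n$, dimension $k$ and minimum Hamming distance $d = n-k+1$. A parity-check matrix for $\mathcal{C}$ is any matrix (possibly with linearly dependent rows) whose rows span $\mathcal{C}^\perp$. For a parity-check matrix $H$, the stopping distance $s(H)$ is the largest integer such that for every set of $s(H)-1$ or fewer columns of $H$, the projection of $H$ onto those columns contains at least one row with exactly one nonzero entry. The stopping redundancy $\rho(\mathcal{C})$ is the smallest number of rows of a parity-check matrix $H$ for $\mathcal{C}$ with $s(H) = d$. An $(n,4,w)$ constant-weight code is a set of binary vectors of length $n$ and Hamming weight $w$ any two of which are at Hamming distance at least $4$. $U(n,w,m)$ denotes the largest possible cardinality of a union of $m$ constant-weight codes, each with parameters $(n,4,w)$. *)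

theory Defs
  imports Complex_Main "HOL-Library.Function_Algebras"
begin

text \<open>Words of length n over a field 'a are functions nat => 'a vanishing outside {..<n}.\<close>

definition words :: "nat \<Rightarrow> (nat \<Rightarrow> 'a::field) set" where
  "words n = {x. \<forall>i\<ge>n. x i = 0}"

definition scl :: "'a::field \<Rightarrow> (nat \<Rightarrow> 'a) \<Rightarrow> (nat \<Rightarrow> 'a)" where
  "scl c x = (\<lambda>i. c * x i)"

definition linear_code :: "nat \<Rightarrow> (nat \<Rightarrow> 'a::field) set \<Rightarrow> bool" where
  "linear_code n C \<longleftrightarrow> C \<subseteq> words n \<and> module.subspace scl C"

definition code_dim :: "(nat \<Rightarrow> 'a::field) set \<Rightarrow> nat" where
  "code_dim C = vector_space.dim scl C"

definition hweight :: "nat \<Rightarrow> (nat \<Rightarrow> 'a::zero) \<Rightarrow> nat" where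
  "hweight n x = card {i. i < n \<and> x i \<noteq> 0}"

text \<open>Minimum Hamming distance of a linear code = minimum weight of a nonzero codeword.\<close>
definition min_distance :: "nat \<Rightarrow> (nat \<Rightarrow> 'a::field) set \<Rightarrow> nat" where
  "min_distance n C = Inf {hweight n c | c. c \<in> C \<and> c \<noteq> 0}"

definition dual_code :: "nat \<Rightarrow> (nat \<Rightarrow> 'a::field) set \<Rightarrow> (nat \<Rightarrow> 'a) set" where
  "dual_code n C = {y \<in> words n. \<forall>x\<in>C. (\<Sum>i<n. x i * y i) = 0}"

text \<open>A parity-check matrix with r rows: rows H 0, ..., H (r-1) (possibly dependent)
  whose span is the dual code; entry (row j, column i) is H j i.\<close>
definition parity_check :: "nat \<Rightarrow> (nat \<Rightarrow> 'a::field) set \<Rightarrow> nat \<Rightarrow> (nat \<Rightarrow> nat \<Rightarrow> 'a) \<Rightarrow> bool" where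
  "parity_check n C r H \<longleftrightarrow> module.span scl (H ` {..<r}) = dual_code n C"

definition has_single_row :: "nat \<Rightarrow> (nat \<Rightarrow> nat \<Rightarrow> 'a::zero) \<Rightarrow> nat set \<Rightarrow> bool" where
  "has_single_row r H S \<longleftrightarrow> (\<exists>j<r. card {i \<in> S. H j i \<noteq> 0} = 1)"

definition stopping_distance :: "nat \<Rightarrow> nat \<Rightarrow> (nat \<Rightarrow> nat \<Rightarrow> 'a::zero) \<Rightarrow> nat" where
  "stopping_distance n r H = (GREATEST s. \<forall>S. S \<subseteq> {..<n} \<and> S \<noteq> {} \<and> card S \<le> s - 1
        \<longrightarrow> has_single_row r H S)"

definition stopping_redundancy :: "nat \<Rightarrow> (nat \<Rightarrow> 'a::field) set \<Rightarrow> nat" where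
  "stopping_redundancy n C = (LEAST r. \<exists>H. parity_check n C r H \<and>
        stopping_distance n r H = min_distance n C)"

text \<open>Binary vectors of length n are identified with their supports (subsets of {..<n}).\<close>
definition cw_code :: "nat \<Rightarrow> nat \<Rightarrow> nat set set \<Rightarrow> bool" where
  "cw_code n w A \<longleftrightarrow> (\<forall>x\<in>A. x \<subseteq> {..<n} \<and> card x = w) \<and>
     (\<forall>x\<in>A. \<forall>y\<in>A. x \<noteq> y \<longrightarrow> card ((x - y) \<union> (y - x)) \<ge> 4)"

definition U :: "nat \<Rightarrow> nat \<Rightarrow> nat \<Rightarrow> nat" where
  "U n w m = Max {card (\<Union>i<m. A i) | A. \<forall>i<m. cw_code n w (A i)}"

end

theory Submission
  imports Defs "HOL-Library.FuncSet"
begin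

interpretation V: vector_space "scl :: 'a::field \<Rightarrow> (nat \<Rightarrow> 'a) \<Rightarrow> _"
  by unfold_locales (auto simp: scl_def fun_eq_iff algebra_simps)

definition supp_set :: "nat set \<Rightarrow> (nat \<Rightarrow> 'a::zero) set" where
  "supp_set J = {x. \<forall>i. i \<notin> J \<longrightarrow> x i = 0}"

lemma card_supp_set:
  assumes "finite J"
  shows "card (supp_set J :: (nat \<Rightarrow> 'a::{zero,finite}) set) = card (UNIV::'a set) ^ card J
         \<and> finite (supp_set J :: (nat \<Rightarrow> 'a) set)"
proof -
  have b: "bij_betw (\<lambda>x. restrict x J) (supp_set J :: (nat \<Rightarrow> 'a) set) (J \<rightarrow>\<^sub>E (UNIV::'a set))"
  proof (rule bij_betw_byWitness[where f'="\<lambda>f i. if i \<in> J then f i else 0"])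
    show "\<forall>a\<in>supp_set J. (\<lambda>i. if i \<in> J then restrict a J i else 0) = a"
      by (auto simp: supp_set_def fun_eq_iff)
    show "\<forall>a'\<in>J \<rightarrow>\<^sub>E UNIV. restrict (\<lambda>i. if i \<in> J then a' i else 0) J = a'"
      by (auto simp: fun_eq_iff PiE_def extensional_def)
    show "(\<lambda>x. restrict x J) ` supp_set J \<subseteq> J \<rightarrow>\<^sub>E UNIV" by auto
    show "(\<lambda>f i. if i \<in> J then f i else 0) ` (J \<rightarrow>\<^sub>E UNIV) \<subseteq> supp_set J"
      by (auto simp: supp_set_def)
  qed
  have "card (J \<rightarrow>\<^sub>E (UNIV::'a set)) = card (UNIV::'a set) ^ card J"
    using assms by (simp add: card_funcsetE)
  moreover have "finite (J \<rightarrow>\<^sub>E (UNIV::'a set))" using assms by (simp add: finite_PiE)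
  ultimately show ?thesis using b bij_betw_same_card bij_betw_finite by metis
qed

lemma words_supp: "words n = supp_set {..<n}"
  by (auto simp: words_def supp_set_def)

definition ip :: "nat \<Rightarrow> (nat \<Rightarrow> 'a::field) \<Rightarrow> (nat \<Rightarrow> 'a) \<Rightarrow> 'a" where
  "ip n x y = (\<Sum>i<n. x i * y i)"

lemma orth_subspace: "V.subspace {x. ip n x y = 0}"
  by (auto simp: V.subspace_def ip_def scl_def sum.distrib distrib_right mult.assoc
      simp flip: sum_distrib_left)

lemma orth_span:
  assumes "\<forall>b\<in>B. ip n b y = 0" shows "\<forall>x\<in>V.span B. ip n x y = 0"
  using V.span_minimal[OF _ orth_subspace, of B n y] assms by auto

lemma card_span_ge:
  assumes "finite B" "V.independent (B :: (nat \<Rightarrow> 'a::{field,finite}) set)"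
    "B \<subseteq> C" "V.subspace C" "finite C"
  shows "card (UNIV::'a set) ^ card B \<le> card C"
proof -
  let ?phi = "\<lambda>f. \<Sum>b\<in>B. scl (f b) b"
  have inj: "inj_on ?phi (B \<rightarrow>\<^sub>E (UNIV::'a set))"
  proof (rule inj_onI)
    fix f g assume f: "f \<in> B \<rightarrow>\<^sub>E (UNIV::'a set)" and g: "g \<in> B \<rightarrow>\<^sub>E (UNIV::'a set)"
      and e: "?phi f = ?phi g"
    have "(\<Sum>b\<in>B. scl (f b - g b) b) = ?phi f - ?phi g"
      by (simp add: V.scale_left_diff_distrib sum_subtractf)
    also have "\<dots> = 0" using e by simp
    finally have z: "(\<Sum>b\<in>B. scl (f b - g b) b) = 0" .
    have "\<forall>u. \<not> ((\<exists>v\<in>B. u v \<noteq> 0) \<and> (\<Sum>v\<in>B. scl (u v) v) = 0)"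
      using assms(2) V.dependent_finite[OF assms(1)] by simp
    from spec[OF this, of "\<lambda>b. f b - g b"] z have "\<forall>b\<in>B. f b - g b = 0" by simp
    then show "f = g" by (intro PiE_ext[OF f g]) auto
  qed
  have img: "?phi ` (B \<rightarrow>\<^sub>E (UNIV::'a set)) \<subseteq> C"
    using assms(3,4) by (auto intro!: V.subspace_sum V.subspace_scale)
  have "card (B \<rightarrow>\<^sub>E (UNIV::'a set)) \<le> card C"
    using card_inj_on_le[OF inj img assms(5)] .
  then show ?thesis using assms(1) by (simp add: card_funcsetE)
qed

lemma sum_single:
  assumes "finite A" "j \<in> A" "\<And>i. i \<in> A \<Longrightarrow> i \<noteq> j \<Longrightarrow> f i = 0"
  shows "sum f A = f j"
  using assms by (simp add: sum.remove sum.neutral)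

lemma card_field_ge2: "2 \<le> card (UNIV :: 'a::{field,finite} set)"
proof -
  have "card {0::'a, 1} = 2" by simp
  moreover have "card {0::'a, 1} \<le> card (UNIV :: 'a set)" by (rule card_mono) auto
  ultimately show ?thesis by simp
qed

lemma sum_fun_apply: "(sum f A) i = (\<Sum>a\<in>A. f a i)" for f :: "'b \<Rightarrow> nat \<Rightarrow> 'a::comm_monoid_add"
  by (induct A rule: infinite_finite_induct) auto

lemma fam_removed:
  assumes A: "\<forall>i<m. cw_code n w (A i)"
    and F: "\<forall>x\<in>F. \<forall>y\<in>F. x \<noteq> y \<longrightarrow> card ((x - y) \<union> (y - x)) < 4"
  shows "card (F \<inter> (\<Union>i<m. A i)) \<le> m"
proof -
  have le1: "card (F \<inter> A i) \<le> 1" if i: "i < m" for i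
  proof -
    have "A i \<subseteq> Pow {..<n}" using A i unfolding cw_code_def by auto
    then have fin: "finite (F \<inter> A i)" by (meson finite_Int finite_Pow_iff finite_lessThan finite_subset)
    have "\<forall>a1\<in>F \<inter> A i. \<forall>a2\<in>F \<inter> A i. a1 = a2"
    proof (intro ballI)
      fix a1 a2 assume a: "a1 \<in> F \<inter> A i" "a2 \<in> F \<inter> A i"
      show "a1 = a2"
      proof (rule ccontr)
        assume ne: "a1 \<noteq> a2"
        then have "4 \<le> card ((a1 - a2) \<union> (a2 - a1))" using A i a unfolding cw_code_def by auto
        moreover have "card ((a1 - a2) \<union> (a2 - a1)) < 4" using F a ne by auto
        ultimately show False by simp
      qed
    qed
    then show ?thesis using card_le_Suc0_iff_eq[OF fin] by simp
  qed
  have "F \<inter> (\<Union>i<m. A i) = (\<Union>i<m. F \<inter> A i)" by auto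
  then have "card (F \<inter> (\<Union>i<m. A i)) \<le> (\<Sum>i<m. card (F \<inter> A i))"
    using card_UN_le[of "{..<m}" "\<lambda>i. F \<inter> A i"] by simp
  also have "\<dots> \<le> (\<Sum>i<m. 1)" by (intro sum_mono le1) simp
  finally show ?thesis by simp
qed

lemma exists_kept:
  assumes A: "\<forall>i<m. cw_code n w (A i)"
    and F: "\<forall>x\<in>F. \<forall>y\<in>F. x \<noteq> y \<longrightarrow> card ((x - y) \<union> (y - x)) < 4"
    and fin: "finite F" and c: "m < card F"
  shows "\<exists>T\<in>F. T \<notin> (\<Union>i<m. A i)"
proof (rule ccontr)
  assume "\<not> ?thesis"
  then have "F \<inter> (\<Union>i<m. A i) = F" by blast
  then show False using fam_removed[OF A F] c by simp
qed

lemma exists_kept2: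
  assumes A: "\<forall>i<m. cw_code n w (A i)"
    and F: "\<forall>x\<in>F. \<forall>y\<in>F. x \<noteq> y \<longrightarrow> card ((x - y) \<union> (y - x)) < 4"
    and fin: "finite F" and c: "m + 2 \<le> card F"
  shows "\<exists>T1\<in>F. \<exists>T2\<in>F. T1 \<noteq> T2 \<and> T1 \<notin> (\<Union>i<m. A i) \<and> T2 \<notin> (\<Union>i<m. A i)"
proof -
  have "card F = card (F \<inter> (\<Union>i<m. A i)) + card (F - (\<Union>i<m. A i))"
    using fin by (metis Diff_Diff_Int card_Diff_subset_Int card_mono finite_Int inf_le1
        le_add_diff_inverse Diff_subset Int_commute)
  then have "2 \<le> card (F - (\<Union>i<m. A i))" using fam_removed[OF A F] c by linarith
  then have "\<not> (\<forall>a1\<in>F - (\<Union>i<m. A i). \<forall>a2\<in>F - (\<Union>i<m. A i). a1 = a2)"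
    using card_le_Suc0_iff_eq[of "F - (\<Union>i<m. A i)"] fin by auto
  then show ?thesis by blast
qed

lemma sd_insert:
  assumes "a \<notin> U0" "b \<notin> U0" "a \<noteq> b"
  shows "card ((insert a U0 - insert b U0) \<union> (insert b U0 - insert a U0)) < 4"
proof -
  have "(insert a U0 - insert b U0) \<union> (insert b U0 - insert a U0) = {a, b}" using assms by auto
  then show ?thesis using assms by simp
qed

lemma sd_remove:
  assumes "i \<in> S" "j \<in> S" "i \<noteq> j"
  shows "card (((S - {i}) - (S - {j})) \<union> ((S - {j}) - (S - {i}))) < 4"
proof -
  have "((S - {i}) - (S - {j})) \<union> ((S - {j}) - (S - {i})) = {i, j}" using assms by auto
  then show ?thesis using assms by simp
qed

locale mds =
  fixes C :: "(nat \<Rightarrow> 'a::{field,finite}) set" and n k d :: nat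
  assumes lin: "linear_code n C" and dimk: "code_dim C = k"
    and md: "min_distance n C = d" and dk: "d = n - k + 1" and d3: "3 \<le> d"
begin

abbreviation "D \<equiv> dual_code n C"

lemma Csub: "V.subspace C" and Cw: "C \<subseteq> words n"
  using lin by (auto simp: linear_code_def)

lemma finC: "finite C"
proof -
  have "finite (supp_set {..<n} :: (nat \<Rightarrow> 'a) set)" by (rule conjunct2[OF card_supp_set]) simp
  then show ?thesis using Cw words_supp finite_subset by metis
qed

lemma kn: "k + 2 \<le> n" using dk d3 by linarith

lemma wt:
  assumes "c \<in> C" "K \<subseteq> {..<n}" "k \<le> card K" "\<forall>i\<in>K. c i = 0"
  shows "c = 0"
proof (rule ccontr)
  assume "c \<noteq> 0"
  then have "hweight n c \<in> {hweight n c | c. c \<in> C \<and> c \<noteq> 0}" using assms(1) by blast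
  then have "Inf {hweight n c | c. c \<in> C \<and> c \<noteq> 0} \<le> hweight n c" by (rule wellorder_Inf_le1)
  then have "d \<le> hweight n c" using md unfolding min_distance_def by simp
  moreover have "{i. i < n \<and> c i \<noteq> 0} \<subseteq> {..<n} - K" using assms(4) by auto
  then have "hweight n c \<le> card ({..<n} - K)" unfolding hweight_def by (intro card_mono) auto
  moreover have "card ({..<n} - K) = n - card K" using assms(2)
    by (simp add: card_Diff_subset finite_subset)
  ultimately show False using assms(3) dk by linarith
qed

lemma basis:
  obtains B where "B \<subseteq> C" "finite B" "V.independent B" "C \<subseteq> V.span B" "card B = k"
proof -
  obtain B where "B \<subseteq> C" "V.independent B" "C \<subseteq> V.span B" "card B = V.dim C"
    using V.basis_exists by blast
  moreover have "finite B" using \<open>B \<subseteq> C\<close> finC finite_subset by blast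
  ultimately show ?thesis using that dimk unfolding code_dim_def by simp
qed

lemma cardC: "card (UNIV::'a set) ^ k \<le> card C"
proof -
  obtain B where "B \<subseteq> C" "finite B" "V.independent B" "card B = k" using basis by metis
  then show ?thesis using card_span_ge[of B C] Csub finC by auto
qed

lemma D_ip: "y \<in> D \<longleftrightarrow> y \<in> words n \<and> (\<forall>x\<in>C. ip n x y = 0)"
  by (simp add: dual_code_def ip_def)

lemma Dsub: "V.subspace D"
  unfolding V.subspace_def dual_code_def words_def
  by (auto simp: scl_def sum.distrib distrib_left mult.left_commute
      simp flip: sum_distrib_left)

lemma D1:
  assumes y: "y \<in> D" and K: "K \<subseteq> {..<n}" "card K \<le> k" "\<forall>i<n. i \<notin> K \<longrightarrow> y i = 0"
  shows "y = 0"
proof -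
  have fK: "finite K" using K(1) finite_subset by blast
  have "k - card K \<le> card ({..<n} - K)" using K fK kn by (simp add: card_Diff_subset)
  then obtain E where E: "E \<subseteq> {..<n} - K" "card E = k - card K" "finite E"
    by (metis obtain_subset_with_card_n)
  define K' where "K' = K \<union> E"
  have K'1: "K' \<subseteq> {..<n}" using E K unfolding K'_def by auto
  have K'2: "card K' = k" unfolding K'_def using E fK K(2)
    by (subst card_Un_disjoint) auto
  have yw: "y \<in> words n" using y by (simp add: D_ip)
  have K'3: "\<forall>i. i \<notin> K' \<longrightarrow> y i = 0"
  proof (intro allI impI)
    fix i assume i: "i \<notin> K'"
    show "y i = 0"
    proof (cases "i < n")
      case True then show ?thesis using K(3) i unfolding K'_def by auto
    next
      case False then show ?thesis using yw unfolding words_def by auto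
    qed
  qed
  show "y = 0"
  proof (rule ccontr)
    assume "y \<noteq> 0"
    then obtain j where j: "y j \<noteq> 0" by (auto simp: fun_eq_iff)
    then have jK: "j \<in> K'" using K'3 by blast
    define L where "L = K' - {j}"
    have fK': "finite K'" using K'1 finite_subset by blast
    have cL: "card L = k - 1" unfolding L_def using jK K'2 fK' by simp
    have k1: "1 \<le> k" using jK K'2 fK' by (metis One_nat_def Suc_leI card_gt_0_iff empty_iff)
    let ?p = "\<lambda>c::nat \<Rightarrow> 'a. (\<lambda>i. if i \<in> L then c i else 0)"
    have img: "?p ` C \<subseteq> supp_set L" by (auto simp: supp_set_def)
    have fL: "finite L" using fK' L_def by simp
    have "card (UNIV::'a set) ^ (k - 1) < card (UNIV::'a set) ^ k"
      using k1 card_field_ge2[where 'a='a] by (intro power_strict_increasing) auto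
    also have "\<dots> \<le> card C" by (rule cardC)
    finally have "card (supp_set L :: (nat \<Rightarrow> 'a) set) < card C"
      using card_supp_set[where 'a='a, OF fL] cL by simp
    then have "\<not> inj_on ?p C"
      using card_inj_on_le[OF _ img] card_supp_set[where 'a='a, OF fL] by (metis not_le)
    then obtain c1 c2 where c: "c1 \<in> C" "c2 \<in> C" "c1 \<noteq> c2" "?p c1 = ?p c2"
      unfolding inj_on_def by blast
    define c where "c = c1 - c2"
    have cC: "c \<in> C" unfolding c_def using c Csub V.subspace_diff by blast
    have cL0: "\<forall>i\<in>L. c i = 0"
    proof
      fix i assume i: "i \<in> L"
      from fun_cong[OF c(4), of i] i show "c i = 0" unfolding c_def by simp
    qed
    have "ip n c y = 0" using y cC by (simp add: D_ip)
    moreover have "ip n c y = c j * y j"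
      unfolding ip_def
    proof (rule sum_single)
      show "j \<in> {..<n}" using jK K'1 by auto
      fix i assume "i \<in> {..<n}" "i \<noteq> j"
      then show "c i * y i = 0" using cL0 K'3 unfolding L_def by auto
    qed simp
    ultimately have "c j = 0" using j by simp
    then have "\<forall>i\<in>K'. c i = 0" using cL0 unfolding L_def by auto
    then have "c = 0" using wt[OF cC K'1] K'2 by simp
    then show False using c(3) unfolding c_def by simp
  qed
qed


lemma ip_diff2: "ip n b (y1 - y2) = ip n b y1 - ip n b y2"
  by (simp add: ip_def right_diff_distrib sum_subtractf)

lemma D2:
  assumes T: "T \<subseteq> {..<n}" "card T = n - k - 1"
  shows "\<exists>y\<in>D. (\<forall>i\<in>T. y i = 0) \<and> (\<forall>i<n. i \<notin> T \<longrightarrow> y i \<noteq> 0)"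
proof -
  obtain B where B: "B \<subseteq> C" "finite B" "V.independent B" "C \<subseteq> V.span B" "card B = k"
    using basis by metis
  define J where "J = {..<n} - T"
  have fJ: "finite J" unfolding J_def by simp
  have cJ: "card J = k + 1" unfolding J_def using T kn
    by (simp add: card_Diff_subset finite_subset)
  let ?g = "\<lambda>y. restrict (\<lambda>b. ip n b y) B"
  have img: "?g ` supp_set J \<subseteq> B \<rightarrow>\<^sub>E (UNIV::'a set)" by auto
  have "card (B \<rightarrow>\<^sub>E (UNIV::'a set)) = card (UNIV::'a set) ^ k"
    using B by (simp add: card_funcsetE)
  also have "\<dots> < card (UNIV::'a set) ^ (k + 1)"
    using card_field_ge2[where 'a='a] by (intro power_strict_increasing) auto
  also have "\<dots> = card (supp_set J :: (nat \<Rightarrow> 'a) set)"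
    using card_supp_set[where 'a='a, OF fJ] cJ by simp
  finally have "\<not> inj_on ?g (supp_set J)"
    using card_inj_on_le[OF _ img] B(2) by (metis finite_PiE finite_UNIV not_le)
  then obtain y1 y2 where yy: "y1 \<in> supp_set J" "y2 \<in> supp_set J" "y1 \<noteq> y2" "?g y1 = ?g y2"
    unfolding inj_on_def by blast
  define y where "y = y1 - y2"
  have yB: "\<forall>b\<in>B. ip n b y = 0"
  proof
    fix b assume b: "b \<in> B"
    from fun_cong[OF yy(4), of b] b show "ip n b y = 0" unfolding y_def ip_diff2 by simp
  qed
  have yJ: "\<forall>i. i \<notin> J \<longrightarrow> y i = 0" using yy(1,2) unfolding y_def supp_set_def by simp
  have yw: "y \<in> words n" using yJ unfolding words_def J_def by auto
  have yD: "y \<in> D" unfolding D_ip using yw orth_span[OF yB] B(4) by blast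
  have yne: "y \<noteq> 0" using yy(3) unfolding y_def by simp
  show ?thesis
  proof (intro bexI[OF _ yD] conjI ballI allI impI)
    fix i assume "i \<in> T" then show "y i = 0" using yJ unfolding J_def by auto
  next
    fix i assume i: "i < n" "i \<notin> T"
    show "y i \<noteq> 0"
    proof
      assume y0: "y i = 0"
      have "i \<in> J" using i unfolding J_def by auto
      then have "card (J - {i}) \<le> k" using cJ fJ by simp
      moreover have "\<forall>i'<n. i' \<notin> J - {i} \<longrightarrow> y i' = 0" using yJ y0 by auto
      ultimately have "y = 0" using D1[OF yD, of "J - {i}"] unfolding J_def by auto
      then show False using yne by simp
    qed
  qed
qed

definition h :: "nat set \<Rightarrow> nat \<Rightarrow> 'a" where
  "h T = (SOME y. y \<in> D \<and> (\<forall>i\<in>T. y i = 0) \<and> (\<forall>i<n. i \<notin> T \<longrightarrow> y i \<noteq> 0))"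

lemma h_prop:
  assumes "T \<subseteq> {..<n}" "card T = n - k - 1"
  shows "h T \<in> D" "\<forall>i\<in>T. h T i = 0" "\<forall>i<n. i \<notin> T \<longrightarrow> h T i \<noteq> 0"
  using someI_ex[OF D2[OF assms, unfolded Bex_def]] unfolding h_def by blast+

end

locale mds2 = mds C n k d for C :: "(nat \<Rightarrow> 'a::{field,finite}) set" and n k d +
  fixes A :: "nat \<Rightarrow> nat set set" and m :: nat
  assumes mdef: "m = min k (n - k - 1)" and Acw: "\<forall>i<m. cw_code n (n - k - 1) (A i)"
begin

definition "Tset = {T. T \<subseteq> {..<n} \<and> card T = n - k - 1}"
definition "Rem = (\<Union>i<m. A i)"
definition "Keep = Tset - Rem"

lemma hT:
  assumes "T \<in> Tset"
  shows "h T \<in> D" "\<forall>i\<in>T. h T i = 0" "\<forall>i<n. i \<notin> T \<longrightarrow> h T i \<noteq> 0"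
  using h_prop assms unfolding Tset_def by auto

lemma insert_Tset:
  assumes "U0 \<subseteq> {..<n}" "card U0 = n - k - 2" "a < n" "a \<notin> U0"
  shows "insert a U0 \<in> Tset"
proof -
  have "finite U0" using assms(1) finite_subset by blast
  then show ?thesis using assms kn unfolding Tset_def by auto
qed

lemma kept_span:
  assumes T: "T \<in> Tset"
  shows "h T \<in> V.span (h ` Keep)"
proof (cases "T \<in> Keep")
  case True then show ?thesis by (intro V.span_base) auto
next
  case False
  then have TR: "T \<in> Rem" using T unfolding Keep_def by auto
  have Tn: "T \<subseteq> {..<n}" and cT: "card T = n - k - 1" using T unfolding Tset_def by auto
  have fT: "finite T" using Tn finite_subset by blast
  have "T \<noteq> {}" using cT kn by auto
  then obtain t where t: "t \<in> T" by blast
  define U0 where "U0 = T - {t}"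
  have U0n: "U0 \<subseteq> {..<n}" using Tn U0_def by auto
  have cU0: "card U0 = n - k - 2" using cT t fT unfolding U0_def by simp
  have fU0: "finite U0" using fT U0_def by simp
  define X where "X = {..<n} - U0"
  have cX: "card X = k + 2" unfolding X_def using U0n cU0 kn fU0
    by (simp add: card_Diff_subset)
  define F where "F = (\<lambda>a. insert a U0) ` X"
  have injF: "inj_on (\<lambda>a. insert a U0) X"
    by (rule inj_onI) (auto simp: X_def)
  have cF: "card F = k + 2" unfolding F_def using card_image[OF injF] cX by simp
  have fF: "finite F" unfolding F_def X_def by simp
  have pw: "\<forall>x\<in>F. \<forall>y\<in>F. x \<noteq> y \<longrightarrow> card ((x - y) \<union> (y - x)) < 4"
    unfolding F_def X_def by (auto intro!: sd_insert)
  have "m + 2 \<le> card F" using cF mdef by simp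
  from exists_kept2[OF Acw pw fF this] obtain T1 T2 where
    TT: "T1 \<in> F" "T2 \<in> F" "T1 \<noteq> T2" "T1 \<notin> Rem" "T2 \<notin> Rem" unfolding Rem_def by blast
  then obtain a b where ab: "a \<in> X" "b \<in> X" "T1 = insert a U0" "T2 = insert b U0"
    unfolding F_def by blast
  have aneb: "a \<noteq> b" using ab TT(3) by auto
  have TU: "T = insert t U0" using t U0_def by auto
  have at: "a \<noteq> t" using ab(3) TT(4) TR TU by auto
  have bt: "b \<noteq> t" using ab(4) TT(5) TR TU by auto
  have T1s: "T1 \<in> Tset" and T2s: "T2 \<in> Tset"
    using ab insert_Tset[OF U0n cU0] unfolding X_def by auto
  have T1K: "T1 \<in> Keep" and T2K: "T2 \<in> Keep" using T1s T2s TT unfolding Keep_def by auto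
  have h1b: "h T1 b \<noteq> 0" using hT(3)[OF T1s] ab aneb unfolding X_def by auto
  have h2a: "h T2 a \<noteq> 0" using hT(3)[OF T2s] ab aneb unfolding X_def by auto
  define \<alpha> where "\<alpha> = h T b / h T1 b"
  define \<beta> where "\<beta> = h T a / h T2 a"
  define z where "z = h T - scl \<alpha> (h T1) - scl \<beta> (h T2)"
  have zD: "z \<in> D" unfolding z_def
    using hT(1)[OF T] hT(1)[OF T1s] hT(1)[OF T2s] Dsub
    by (intro V.subspace_diff V.subspace_scale) auto
  have zi: "z i = h T i - \<alpha> * h T1 i - \<beta> * h T2 i" for i
    unfolding z_def by (simp add: scl_def)
  have z0: "\<forall>i<n. i \<notin> {..<n} - insert a (insert b U0) \<longrightarrow> z i = 0"
  proof (intro allI impI)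
    fix i assume "i < n" "i \<notin> {..<n} - insert a (insert b U0)"
    then have i: "i = a \<or> i = b \<or> i \<in> U0" by auto
    have a1: "h T1 a = 0" using hT(2)[OF T1s] ab by auto
    have b2: "h T2 b = 0" using hT(2)[OF T2s] ab by auto
    show "z i = 0"
    proof -
      { assume "i = a" then have ?thesis using zi a1 h2a unfolding \<beta>_def by simp }
      moreover { assume "i = b" then have ?thesis using zi b2 h1b unfolding \<alpha>_def by simp }
      moreover { assume iU: "i \<in> U0"
        then have "h T i = 0" "h T1 i = 0" "h T2 i = 0"
          using hT(2)[OF T] hT(2)[OF T1s] hT(2)[OF T2s] ab U0_def by auto
        then have ?thesis using zi by simp }
      ultimately show ?thesis using i by blast
    qed
  qed
  have "card ({..<n} - insert a (insert b U0)) = n - (n - k - 2 + 2)"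
    using ab aneb U0n cU0 fU0 unfolding X_def by (subst card_Diff_subset) auto
  then have "card ({..<n} - insert a (insert b U0)) \<le> k" by simp
  then have "z = 0" using D1[OF zD _ _ z0] by auto
  then have "h T = scl \<alpha> (h T1) + scl \<beta> (h T2)" unfolding z_def by (simp add: algebra_simps)
  moreover have "scl \<alpha> (h T1) + scl \<beta> (h T2) \<in> V.span (h ` Keep)"
    using T1K T2K by (intro V.span_add V.span_scale V.span_base) auto
  ultimately show ?thesis by simp
qed


lemma span_all: "D \<subseteq> V.span (h ` Keep)"
proof
  fix y assume yD: "y \<in> D"
  define P where "P = {..<n - k}"
  define Tp where "Tp = (\<lambda>p. P - {p})"
  have Tps: "Tp p \<in> Tset" if "p \<in> P" for p
    using that kn unfolding Tp_def P_def Tset_def by auto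
  define z where "z = y - (\<Sum>p\<in>P. scl (y p / h (Tp p) p) (h (Tp p)))"
  have zD: "z \<in> D" unfolding z_def using yD Dsub hT(1)[OF Tps]
    by (intro V.subspace_diff V.subspace_sum V.subspace_scale) auto
  have z0: "\<forall>i<n. i \<notin> {..<n} - P \<longrightarrow> z i = 0"
  proof (intro allI impI)
    fix i assume "i < n" "i \<notin> {..<n} - P"
    then have iP: "i \<in> P" by auto
    have "(\<Sum>p\<in>P. scl (y p / h (Tp p) p) (h (Tp p))) i = (\<Sum>p\<in>P. y p / h (Tp p) p * h (Tp p) i)"
      by (simp add: sum_fun_apply scl_def)
    also have "\<dots> = y i / h (Tp i) i * h (Tp i) i"
    proof (rule sum_single)
      fix p assume "p \<in> P" "p \<noteq> i"
      then have "h (Tp p) i = 0" using hT(2)[OF Tps] iP unfolding Tp_def by auto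
      then show "y p / h (Tp p) p * h (Tp p) i = 0" by simp
    qed (use iP in \<open>auto simp: P_def\<close>)
    also have "\<dots> = y i"
    proof -
      have "h (Tp i) i \<noteq> 0" using hT(3)[OF Tps[OF iP]] iP kn unfolding Tp_def P_def by auto
      then show ?thesis by simp
    qed
    finally show "z i = 0" unfolding z_def by simp
  qed
  have "card ({..<n} - P) \<le> k" unfolding P_def using kn by simp
  then have "z = 0" using D1[OF zD _ _ z0] by auto
  then have "y = (\<Sum>p\<in>P. scl (y p / h (Tp p) p) (h (Tp p)))" unfolding z_def by simp
  also have "\<dots> \<in> V.span (h ` Keep)"
    using kept_span[OF Tps] by (intro V.span_sum V.span_scale) auto
  finally show "y \<in> V.span (h ` Keep)" .
qed

lemma single_of:
  assumes "T \<in> Tset" "S \<subseteq> {..<n}" "S - T = {x}"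
  shows "card {i\<in>S. h T i \<noteq> 0} = 1"
proof -
  have "{i\<in>S. h T i \<noteq> 0} = {x}"
    using hT(2,3)[OF assms(1)] assms(2,3) by blast
  then show ?thesis by simp
qed

lemma single:
  assumes S: "S \<subseteq> {..<n}" "S \<noteq> {}" "card S \<le> n - k"
  shows "\<exists>T\<in>Keep. card {i\<in>S. h T i \<noteq> 0} = 1"
proof -
  have fS: "finite S" using S finite_subset by blast
  show ?thesis
  proof (cases "card S = n - k")
    case True
    define F where "F = (\<lambda>i. S - {i}) ` S"
    have injF: "inj_on (\<lambda>i. S - {i}) S" by (rule inj_onI) auto
    have cF: "card F = n - k" unfolding F_def using card_image[OF injF] True by simp
    have fF: "finite F" unfolding F_def using fS by simp
    have pw: "\<forall>x\<in>F. \<forall>y\<in>F. x \<noteq> y \<longrightarrow> card ((x - y) \<union> (y - x)) < 4"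
      unfolding F_def by (auto intro!: sd_remove)
    have "m < card F" using cF mdef kn by simp
    from exists_kept[OF Acw pw fF this] obtain T where T: "T \<in> F" "T \<notin> Rem"
      unfolding Rem_def by blast
    then obtain i where i: "i \<in> S" "T = S - {i}" unfolding F_def by blast
    have Ts: "T \<in> Tset" using i S True fS unfolding Tset_def by auto
    have "S - T = {i}" using i by auto
    then show ?thesis using single_of[OF Ts S(1)] Ts T unfolding Keep_def by blast
  next
    case False
    then have lt: "card S < n - k" using S by simp
    obtain i where iS: "i \<in> S" using S by blast
    define S' where "S' = S - {i}"
    have cS': "card S' = card S - 1" unfolding S'_def using iS fS by simp
    have "n - k - 2 - card S' \<le> card ({..<n} - S)"
      using S fS lt kn cS' card_gt_0_iff[of S] by (simp add: card_Diff_subset)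
    then obtain E where E: "E \<subseteq> {..<n} - S" "card E = n - k - 2 - card S'" "finite E"
      by (metis obtain_subset_with_card_n)
    define U0 where "U0 = S' \<union> E"
    have fS': "finite S'" using fS S'_def by simp
    have U0n: "U0 \<subseteq> {..<n}" using E S unfolding U0_def S'_def by auto
    have cU0: "card U0 = n - k - 2" unfolding U0_def
      using E fS' cS' lt iS fS S(2) unfolding S'_def
      by (subst card_Un_disjoint) (auto simp: card_gt_0_iff)
    have fU0: "finite U0" using U0n finite_subset by blast
    have iU0: "i \<notin> U0" using E iS unfolding U0_def S'_def by auto
    have in': "i < n" using iS S by auto
    define X where "X = {..<n} - U0 - {i}"
    have "card ({..<n} - U0) = n - (n - k - 2)" using U0n cU0 fU0 by (simp add: card_Diff_subset)
    then have cX: "card X = k + 1" unfolding X_def using iU0 in' kn by simp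
    define F where "F = (\<lambda>a. insert a U0) ` X"
    have injF: "inj_on (\<lambda>a. insert a U0) X"
      by (rule inj_onI) (auto simp: X_def)
    have cF: "card F = k + 1" unfolding F_def using card_image[OF injF] cX by simp
    have fF: "finite F" unfolding F_def X_def by simp
    have pw: "\<forall>x\<in>F. \<forall>y\<in>F. x \<noteq> y \<longrightarrow> card ((x - y) \<union> (y - x)) < 4"
      unfolding F_def X_def by (auto intro!: sd_insert)
    have "m < card F" using cF mdef by simp
    from exists_kept[OF Acw pw fF this] obtain T where T: "T \<in> F" "T \<notin> Rem"
      unfolding Rem_def by blast
    then obtain a where a: "a \<in> X" "T = insert a U0" unfolding F_def by blast
    have Ts: "T \<in> Tset" using a insert_Tset[OF U0n cU0] unfolding X_def by auto
    have "S - T = {i}" using a iS iU0 unfolding X_def U0_def S'_def by auto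
    then show ?thesis using single_of[OF Ts S(1)] Ts T unfolding Keep_def by blast
  qed
qed

end

theorem theorem18:
  fixes C :: "(nat \<Rightarrow> 'a::{field,finite}) set" and n k d :: nat
  assumes "linear_code n C"
    and "code_dim C = k"
    and "min_distance n C = d"
    and "d = n - k + 1"
    and "d \<ge> 3"
  shows "stopping_redundancy n C \<le> (n choose (d - 2)) - U n (d - 2) (min k (n - k - 1))"
proof -
  interpret mds C n k d using assms by unfold_locales
  define m where "m = min k (n - k - 1)"
  have w: "d - 2 = n - k - 1" using assms(4) kn by simp
  define Fam where "Fam = {card (\<Union>i<m. A i) | A. \<forall>i<m. cw_code n (n - k - 1) (A i)}"
  have Fam_bd: "Fam \<subseteq> {..card (Pow {..<n::nat})}"
  proof
    fix x assume "x \<in> Fam"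
    then obtain A where A: "x = card (\<Union>i<m. A i)" "\<forall>i<m. cw_code n (n - k - 1) (A i)"
      unfolding Fam_def by blast
    have "(\<Union>i<m. A i) \<subseteq> Pow {..<n}" using A(2) unfolding cw_code_def by auto
    then have "x \<le> card (Pow {..<n})" unfolding A(1) by (intro card_mono) auto
    then show "x \<in> {..card (Pow {..<n::nat})}" by simp
  qed
  have "0 \<in> Fam" unfolding Fam_def cw_code_def
    by (rule CollectI, rule exI[of _ "\<lambda>_. {}"]) simp
  then have "Max Fam \<in> Fam" using Fam_bd by (intro Max_in) (auto intro: finite_subset)
  then obtain A where A: "\<forall>i<m. cw_code n (n - k - 1) (A i)" "Max Fam = card (\<Union>i<m. A i)"
    unfolding Fam_def by auto
  have UA: "U n (d - 2) (min k (n - k - 1)) = card (\<Union>i<m. A i)"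
    using A(2) unfolding U_def w m_def Fam_def by simp
  interpret mds2 C n k d A m using A(1) m_def by unfold_locales auto
  have RT: "Rem \<subseteq> Tset" using A(1) unfolding Rem_def Tset_def cw_code_def by auto
  have fT: "finite Tset" unfolding Tset_def by simp
  have cT: "card Tset = n choose (d - 2)" unfolding Tset_def w
    using n_subsets[of "{..<n}" "n - k - 1"] by simp
  define r where "r = card Keep"
  have rv: "r = (n choose (d - 2)) - U n (d - 2) (min k (n - k - 1))"
    unfolding r_def Keep_def UA using RT fT cT
    by (simp add: card_Diff_subset finite_subset Rem_def)
  have fK: "finite Keep" unfolding Keep_def using fT by simp
  obtain e where e: "bij_betw e {0..<r} Keep" using ex_bij_betw_nat_finite[OF fK] r_def by blast
  define H where "H = (\<lambda>j. h (e j))"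
  have eK: "e ` {..<r} = Keep" using e unfolding bij_betw_def atLeast0LessThan by simp
  have HK: "H ` {..<r} = h ` Keep" unfolding H_def
    by (simp only: eK[symmetric] image_image)
  have KT: "Keep \<subseteq> Tset" unfolding Keep_def by auto
  have HD: "H j \<in> D" if "j < r" for j
  proof -
    have "e j \<in> Tset" using eK KT that by blast
    then show ?thesis unfolding H_def by (rule hT(1))
  qed
  have pc: "parity_check n C r H"
    unfolding parity_check_def HK
  proof
    show "V.span (h ` Keep) \<subseteq> D" using Dsub KT hT(1) by (intro V.span_minimal) auto
    show "D \<subseteq> V.span (h ` Keep)" by (rule span_all)
  qed
  define Pd where "Pd = (\<lambda>s. \<forall>S. S \<subseteq> {..<n} \<and> S \<noteq> {} \<and> card S \<le> s - 1 \<longrightarrow> has_single_row r H S)"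
  have hs: "has_single_row r H S" if Sa: "S \<subseteq> {..<n}" "S \<noteq> {}" "card S \<le> n - k" for S
  proof -
    obtain T where T: "T \<in> Keep" "card {i\<in>S. h T i \<noteq> 0} = 1" using single[OF Sa] by blast
    have "T \<in> e ` {..<r}" using T(1) eK by simp
    then obtain j where j: "j \<in> {..<r}" "T = e j" by (rule imageE)
    have "j < r \<and> card {i\<in>S. H j i \<noteq> 0} = 1" using j T(2) unfolding H_def by simp
    then show ?thesis unfolding has_single_row_def by blast
  qed
  have sd: "stopping_distance n r H = d"
  proof (cases "\<exists>c\<in>C. c \<noteq> 0")
    case True
    then have ne: "{hweight n c | c. c \<in> C \<and> c \<noteq> 0} \<noteq> {}" by blast
    have "d \<in> {hweight n c | c. c \<in> C \<and> c \<noteq> 0}"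
      using Inf_nat_def1[OF ne] assms(3) unfolding min_distance_def by simp
    then obtain c where c: "c \<in> C" "c \<noteq> 0" "hweight n c = d" by blast
    have "(GREATEST s. Pd s) = d"
    proof (rule Greatest_equality)
      show "Pd d" unfolding Pd_def
      proof (intro allI impI)
        fix S assume S: "S \<subseteq> {..<n} \<and> S \<noteq> {} \<and> card S \<le> d - 1"
        then have "card S \<le> n - k" using assms(4) by simp
        then show "has_single_row r H S" using hs S by blast
      qed
      fix s assume Ps: "Pd s"
      show "s \<le> d"
      proof (rule ccontr)
        assume "\<not> s \<le> d"
        define S where "S = {i. i < n \<and> c i \<noteq> 0}"
        have cS: "card S = d" using c(3) unfolding S_def hweight_def by simp
        have Sn: "S \<subseteq> {..<n}" unfolding S_def by auto
        have "S \<noteq> {}" using cS assms(5) by auto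
        moreover have "card S \<le> s - 1" using cS \<open>\<not> s \<le> d\<close> by simp
        ultimately have "has_single_row r H S" using Ps Sn unfolding Pd_def by blast
        then obtain j where j: "j < r" "card {i\<in>S. H j i \<noteq> 0} = 1"
          unfolding has_single_row_def by blast
        obtain i0 where i0: "{i\<in>S. H j i \<noteq> 0} = {i0}" using card_1_singletonE[OF j(2)] by blast
        have "ip n c (H j) = 0" using HD[OF j(1)] c(1) by (simp add: D_ip)
        moreover have "ip n c (H j) = c i0 * H j i0"
          unfolding ip_def
        proof (rule sum_single)
          show "i0 \<in> {..<n}" using i0 Sn by auto
          fix i assume "i \<in> {..<n}" "i \<noteq> i0"
          then have "i \<notin> {i\<in>S. H j i \<noteq> 0}" using i0 by blast
          then show "c i * H j i = 0" using \<open>i \<in> {..<n}\<close> unfolding S_def by auto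
        qed simp
        moreover have "i0 \<in> {i\<in>S. H j i \<noteq> 0}" using i0 by blast
        then have "c i0 \<noteq> 0" "H j i0 \<noteq> 0" unfolding S_def by auto
        ultimately show False by simp
      qed
    qed
    then show ?thesis unfolding stopping_distance_def Pd_def .
  next
    case False
    obtain B where B: "B \<subseteq> C" "V.independent B" "card B = k" using basis by metis
    have "0 \<notin> B" using B(2) V.dependent_zero by blast
    then have "B = {}" using B(1) False by auto
    then have k0: "k = 0" using B(3) by simp
    have allP: "Pd s" for s
      unfolding Pd_def
    proof (intro allI impI)
      fix S assume S: "S \<subseteq> {..<n} \<and> S \<noteq> {} \<and> card S \<le> s - 1"
      then have "card S \<le> card {..<n}" by (intro card_mono) auto
      then have "card S \<le> n - k" using k0 by simp
      then show "has_single_row r H S" using hs S by blast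
    qed
    have e1: "(\<lambda>x. Pd x \<and> (\<forall>y. Pd y \<longrightarrow> y \<le> x)) = (\<lambda>x. False)"
    proof (rule ext)
      fix x
      have "\<not> Suc x \<le> x" by simp
      then show "(Pd x \<and> (\<forall>y. Pd y \<longrightarrow> y \<le> x)) = False" using allP by blast
    qed
    have e2: "(\<lambda>x::nat. x \<in> {} \<and> (\<forall>y. y \<in> {} \<longrightarrow> x \<le> y)) = (\<lambda>x. False)" by simp
    have "stopping_distance n r H = (THE x. False)"
      unfolding stopping_distance_def Pd_def[symmetric] Greatest_def e1 ..
    moreover have "d = (THE x::nat. False)"
    proof -
      have emp: "{hweight n c | c. c \<in> C \<and> c \<noteq> 0} = {}" using False by auto
      have "d = Inf ({}::nat set)" using assms(3) emp unfolding min_distance_def by simp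
      also have "\<dots> = (THE x::nat. False)" unfolding Inf_nat_def Least_def by simp
      finally show ?thesis .
    qed
    ultimately show ?thesis by simp
  qed
  have "stopping_redundancy n C \<le> r"
    unfolding stopping_redundancy_def
    by (rule Least_le) (use pc sd assms(3) in auto)
  then show ?thesis using rv by simp
qed

end
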